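(* Let $G$ be a 5-vertex-critical $(P_5,\text{chair})$-free graph that is not isomorphic to any graph in $\mathcal{F}=\{K_5,W,P,Q_1,Q_2,Q_3\}$, and let $C=v_1v_2v_3v_4v_5v_1$ be an induced $C_5$ in $G$. Then $|S^2_3(i)|\le 3$ for all $1\le i\le 5$.
   Context: All graphs are finite and simple; $P_5$ is the path on 5 vertices; the chair is a $P_4$ plus a vertex adjacent to exactly one of the two middle vertices of the $P_4$; "$H$-free" means no induced subgraph isomorphic to $H$; $G$ is $k$-vertex-critical if $\chi(G)=k$ and $\chi(G-v)<k$ for all $v$. Indices modulo 5. $S^2_3(i)=\{v\in V(G)\setminus V(C): N(v)\cap V(C)=\{v_{i-2},v_i,v_{i+2}\}\}$. The graphs of $\mathcal{F}$ (other than $K_5$) are given by adjacency lists on vertex sets $\{0,\dots,n-1\}$: $W$: 0:1 4 5 6; 1:0 2 5 6; 2:1 3 5 6; 3:2 4 5 6; 4:0 3 5 6; 5:0 1 2 3 4 6; 6:0 1 2 3 4 5. $P$: 0:1 4 5 6; 1:0 2 7 8; 2:1 3 5 6 7 8; 3:2 4 5 6 7 8; 4:0 3 7 8; 5:0 2 3 7; 6:0 2 3 8; 7:1 2 3 4 5 8; 8:1 2 3 4 6 7. $Q_1$: 0:1 4 5 6; 1:0 2 5 6 7 8; 2:1 3 5 6 7 8; 3:2 4 7 8; 4:0 3 7 8; 5:0 1 2 6 7; 6:0 1 2 5 8; 7:1 2 3 4 5; 8:1 2 3 4 6. $Q_2$: 0:1 4 5 6; 1:0 2 5 6 7 8; 2:1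 3 5 6 7 8; 3:2 4 5 6 7 8; 4:0 3 7 8; 5:0 2 3 6 7; 6:0 2 3 5 8; 7:1 2 3 4 5; 8:1 2 3 4 6. $Q_3$: 0:1 4 5 6; 1:0 2 5 7 8; 2:1 3 5 7 8; 3:2 4 6 7 8; 4:0 3 6 7 8; 5:0 1 2 6; 6:0 3 4 5 8; 7:1 2 3 4 8; 8:1 2 3 4 6 7. *)

theory Defs
  imports Main
begin

definition simple_graph :: "'a set \<Rightarrow> ('a \<Rightarrow> 'a \<Rightarrow> bool) \<Rightarrow> bool" where
  "simple_graph V E \<longleftrightarrow> finite V \<and> (\<forall>x y. E x y \<longrightarrow> x \<in> V \<and> y \<in> V)
     \<and> (\<forall>x y. E x y \<longrightarrow> E y x) \<and> (\<forall>x. \<not> E x x)"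

definition colorable :: "'a set \<Rightarrow> ('a \<Rightarrow> 'a \<Rightarrow> bool) \<Rightarrow> nat \<Rightarrow> bool" where
  "colorable V E k \<longleftrightarrow> (\<exists>f :: 'a \<Rightarrow> nat. (\<forall>v\<in>V. f v < k)
     \<and> (\<forall>x\<in>V. \<forall>y\<in>V. E x y \<longrightarrow> f x \<noteq> f y))"

definition chromatic_number :: "'a set \<Rightarrow> ('a \<Rightarrow> 'a \<Rightarrow> bool) \<Rightarrow> nat" where
  "chromatic_number V E = (LEAST k. colorable V E k)"

definition vertex_critical :: "'a set \<Rightarrow> ('a \<Rightarrow> 'a \<Rightarrow> bool) \<Rightarrow> nat \<Rightarrow> bool" where
  "vertex_critical V E k \<longleftrightarrow> chromatic_number V E = k
     \<and> (\<forall>v\<in>V. chromatic_number (V - {v}) E < k)"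

(* small pattern graphs on {0..<n} given by adjacency lists (symmetric closure) *)
definition adj_rel :: "nat list list \<Rightarrow> nat \<Rightarrow> nat \<Rightarrow> bool" where
  "adj_rel A i j \<longleftrightarrow> (i < length A \<and> j \<in> set (A ! i)) \<or> (j < length A \<and> i \<in> set (A ! j))"

definition contains_induced :: "'a set \<Rightarrow> ('a \<Rightarrow> 'a \<Rightarrow> bool) \<Rightarrow> nat \<Rightarrow> (nat \<Rightarrow> nat \<Rightarrow> bool) \<Rightarrow> bool" where
  "contains_induced V E n H \<longleftrightarrow> (\<exists>f. inj_on f {0..<n} \<and> f ` {0..<n} \<subseteq> V
     \<and> (\<forall>i<n. \<forall>j<n. E (f i) (f j) \<longleftrightarrow> H i j))"

definition isomorphic_to :: "'a set \<Rightarrow> ('a \<Rightarrow> 'a \<Rightarrow> bool) \<Rightarrow> nat \<Rightarrow> (nat \<Rightarrow> nat \<Rightarrow> bool) \<Rightarrow> bool" where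
  "isomorphic_to V E n H \<longleftrightarrow> (\<exists>f. bij_betw f {0..<n} V
     \<and> (\<forall>i<n. \<forall>j<n. E (f i) (f j) \<longleftrightarrow> H i j))"

definition P5_adj :: "nat list list" where
  "P5_adj = [[1], [0, 2], [1, 3], [2, 4], [3]]"

(* P4 = 0-1-2-3, plus vertex 4 adjacent to the middle vertex 1 only *)
definition chair_adj :: "nat list list" where
  "chair_adj = [[1], [0, 2, 4], [1, 3], [2], [1]]"

definition K5_adj :: "nat list list" where
  "K5_adj = [[1,2,3,4], [0,2,3,4], [0,1,3,4], [0,1,2,4], [0,1,2,3]]"

definition W_adj :: "nat list list" where
  "W_adj = [ [1, 4, 5, 6], [0, 2, 5, 6], [1, 3, 5, 6], [2, 4, 5, 6], [0, 3, 5, 6], [0, 1, 2, 3, 4, 6], [0, 1, 2, 3, 4, 5] ]"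

definition P_adj :: "nat list list" where
  "P_adj = [ [1, 4, 5, 6], [0, 2, 7, 8], [1, 3, 5, 6, 7, 8], [2, 4, 5, 6, 7, 8], [0, 3, 7, 8], [0, 2, 3, 7], [0, 2, 3, 8], [1, 2, 3, 4, 5, 8], [1, 2, 3, 4, 6, 7] ]"

definition Q1_adj :: "nat list list" where
  "Q1_adj = [ [1, 4, 5, 6], [0, 2, 5, 6, 7, 8], [1, 3, 5, 6, 7, 8], [2, 4, 7, 8], [0, 3, 7, 8], [0, 1, 2, 6, 7], [0, 1, 2, 5, 8], [1, 2, 3, 4, 5], [1, 2, 3, 4, 6] ]"

definition Q2_adj :: "nat list list" where
  "Q2_adj = [ [1, 4, 5, 6], [0, 2, 5, 6, 7, 8], [1, 3, 5, 6, 7, 8], [2, 4, 5, 6, 7, 8], [0, 3, 7, 8], [0, 2, 3, 6, 7], [0, 2, 3, 5, 8], [1, 2, 3, 4, 5], [1, 2, 3, 4, 6] ]"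

definition Q3_adj :: "nat list list" where
  "Q3_adj = [ [1, 4, 5, 6], [0, 2, 5, 7, 8], [1, 3, 5, 7, 8], [2, 4, 6, 7, 8], [0, 3, 6, 7, 8], [0, 1, 2, 6], [0, 3, 4, 5, 8], [1, 2, 3, 4, 8], [1, 2, 3, 4, 6, 7] ]"

definition family_F :: "nat list list set" where
  "family_F = {K5_adj, W_adj, P_adj, Q1_adj, Q2_adj, Q3_adj}"

definition induced_C5 :: "'a set \<Rightarrow> ('a \<Rightarrow> 'a \<Rightarrow> bool) \<Rightarrow> (nat \<Rightarrow> 'a) \<Rightarrow> bool" where
  "induced_C5 V E v \<longleftrightarrow> inj_on v {0..<5} \<and> v ` {0..<5} \<subseteq> V
     \<and> (\<forall>i<5. \<forall>j<5. E (v i) (v j) \<longleftrightarrow> (j = (i + 1) mod 5 \<or> i = (j + 1) mod 5))"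

(* S^2_3(i): vertices outside C whose neighbours on C are exactly v_{i-2}, v_i, v_{i+2} *)
definition S23 :: "'a set \<Rightarrow> ('a \<Rightarrow> 'a \<Rightarrow> bool) \<Rightarrow> (nat \<Rightarrow> 'a) \<Rightarrow> nat \<Rightarrow> 'a set" where
  "S23 V E v i = {u \<in> V - v ` {0..<5}.
     {w \<in> v ` {0..<5}. E u w} = {v ((i + 3) mod 5), v (i mod 5), v ((i + 2) mod 5)}}"

end

theory Submission
  imports Defs
begin


lemma all5: "(\<forall>i<(5::nat). P i) = (P 0 \<and> P 1 \<and> P 2 \<and> P 3 \<and> P 4)"
  by (auto simp: less_Suc_eq numeral_eq_Suc)

lemma noP5:
  assumes nP5: "\<not> contains_induced V E 5 (adj_rel P5_adj)"
    and sym: "\<And>x y. E x y = E y x" and irr: "\<And>x. \<not> E x x"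
    and "a \<in> V" "b \<in> V" "c \<in> V" "d \<in> V" "e \<in> V"
    and dist: "distinct [a,b,c,d,e]"
    and "E a b" "E b c" "E c d" "E d e"
    and "\<not> E a c" "\<not> E a d" "\<not> E a e" "\<not> E b d" "\<not> E b e" "\<not> E c e"
  shows False
proof -
  let ?f = "\<lambda>i. [a,b,c,d,e] ! i"
  have "inj_on ?f {0..<5}"
    by (rule inj_on_nth) (use dist in auto)
  moreover have "?f ` {0..<5} \<subseteq> V"
    using assms(4-8) by (auto simp: less_Suc_eq numeral_eq_Suc)
  moreover have "\<forall>i<5. \<forall>j<5. E (?f i) (?f j) \<longleftrightarrow> adj_rel P5_adj i j"
    unfolding all5 using assms(10-) sym irr
    by (simp add: adj_rel_def P5_adj_def)
  ultimately show False using nP5 unfolding contains_induced_def by blast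
qed


lemma noChair:
  assumes nCh: "\<not> contains_induced V E 5 (adj_rel chair_adj)"
    and sym: "\<And>x y. E x y = E y x" and irr: "\<And>x. \<not> E x x"
    and "a \<in> V" "b \<in> V" "c \<in> V" "d \<in> V" "e \<in> V"
    and dist: "distinct [a,b,c,d,e]"
    and "E a b" "E b c" "E c d" "E b e"
    and "\<not> E a c" "\<not> E a d" "\<not> E a e" "\<not> E b d" "\<not> E c e" "\<not> E d e"
  shows False
proof -
  let ?f = "\<lambda>i. [a,b,c,d,e] ! i"
  have "inj_on ?f {0..<5}"
    by (rule inj_on_nth) (use dist in auto)
  moreover have "?f ` {0..<5} \<subseteq> V"
    using assms(4-8) by (auto simp: less_Suc_eq numeral_eq_Suc)
  moreover have "\<forall>i<5. \<forall>j<5. E (?f i) (?f j) \<longleftrightarrow> adj_rel chair_adj i j"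
    unfolding all5 using assms(10-) sym irr
    by (simp add: adj_rel_def chair_adj_def)
  ultimately show False using nCh unfolding contains_induced_def by blast
qed

lemma colorable_card:
  assumes "finite V" "\<And>x. \<not> E x x"
  shows "colorable V E (card V)"
proof -
  obtain h where h: "bij_betw h V {0..<card V}" using ex_bij_betw_finite_nat[OF assms(1)] by blast
  have 1: "\<forall>v\<in>V. h v < card V" using h unfolding bij_betw_def by auto
  have 2: "\<forall>x\<in>V. \<forall>y\<in>V. E x y \<longrightarrow> h x \<noteq> h y"
  proof (intro ballI impI)
    fix x y assume "x \<in> V" "y \<in> V" "E x y"
    then have "x \<noteq> y" using assms(2) by auto
    then show "h x \<noteq> h y" using h \<open>x \<in> V\<close> \<open>y \<in> V\<close> unfolding bij_betw_def inj_on_def by blast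
  qed
  show ?thesis unfolding colorable_def using 1 2 by blast
qed

lemma colorable_chrom:
  assumes "finite V" "\<And>x. \<not> E x x"
  shows "colorable V E (chromatic_number V E)"
  unfolding chromatic_number_def by (rule LeastI[of "colorable V E", OF colorable_card[of V E, OF assms]])

lemma chrom_le: "colorable V E k \<Longrightarrow> chromatic_number V E \<le> k"
  unfolding chromatic_number_def by (rule Least_le)

lemma colorable_mono: assumes "colorable V E k" "k \<le> k'" "W \<subseteq> V" shows "colorable W E k'"
proof -
  obtain f where f: "\<forall>v\<in>V. f v < k" "\<forall>x\<in>V. \<forall>y\<in>V. E x y \<longrightarrow> f x \<noteq> f y"
    using assms(1) unfolding colorable_def by blast
  have "\<forall>v\<in>W. f v < k'" using f(1) assms(2,3) by force
  moreover have "\<forall>x\<in>W. \<forall>y\<in>W. E x y \<longrightarrow> f x \<noteq> f y" using f(2) assms(3) by blast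
  ultimately show ?thesis unfolding colorable_def by blast
qed

lemma crit_facts:
  assumes "finite V" "\<And>x. \<not> E x x" "vertex_critical V E 5"
  shows "\<not> colorable V E 4" "\<And>w. w \<in> V \<Longrightarrow> colorable (V - {w}) E 4"
proof -
  show "\<not> colorable V E 4"
  proof
    assume "colorable V E 4"
    then have "chromatic_number V E \<le> 4" by (rule chrom_le)
    then show False using assms(3) unfolding vertex_critical_def by simp
  qed
  fix w assume "w \<in> V"
  then have "chromatic_number (V - {w}) E < 5" using assms(3) unfolding vertex_critical_def by auto
  moreover have "colorable (V - {w}) E (chromatic_number (V - {w}) E)"
    by (rule colorable_chrom) (use assms in auto)
  ultimately show "colorable (V - {w}) E 4" using colorable_mono[of "V - {w}" E _ 4 "V - {w}"] by simp
qed

lemma dominated: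
  assumes nc: "\<not> colorable V E 4" and col: "colorable (V - {x}) E 4"
    and sym: "\<And>x y. E x y = E y x" and irr: "\<And>x. \<not> E x x"
    and "y \<in> V" "\<not> E x y" "\<And>w. E x w \<Longrightarrow> E y w" and xy: "x \<noteq> y"
  shows False
proof -
  obtain f :: "_ \<Rightarrow> nat" where f: "\<forall>v\<in>V - {x}. f v < 4" "\<forall>a\<in>V-{x}. \<forall>b\<in>V-{x}. E a b \<longrightarrow> f a \<noteq> f b"
    using col unfolding colorable_def by blast
  have yx: "y \<noteq> x" using xy by blast
  let ?g = "f(x := f y)"
  have "colorable V E 4" unfolding colorable_def
  proof (rule exI[of _ ?g], intro conjI ballI impI)
    fix a assume "a \<in> V" then show "?g a < 4" using f(1) yx \<open>y\<in>V\<close> by auto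
  next
    fix a b assume ab: "a \<in> V" "b \<in> V" "E a b"
    show "?g a \<noteq> ?g b"
    proof (cases "a = x")
      case True
      then have "b \<noteq> x" using irr ab by auto
      moreover have "E y b" using assms(7) ab True by auto
      moreover have "b \<noteq> y" using \<open>E y b\<close> irr by auto
      ultimately show ?thesis using f(2) True ab \<open>y\<in>V\<close> yx by auto
    next
      case False
      show ?thesis
      proof (cases "b = x")
        case True
        have "E y a" using assms(7) ab True sym by auto
        then show ?thesis using f(2) True ab \<open>y\<in>V\<close> yx False sym by auto
      next
        case False2: False
        then show ?thesis using f(2) ab False by auto
      qed
    qed
  qed
  then show False using nc by blast
qed


lemma noK5:
  assumes iso: "\<not> isomorphic_to V E 5 (adj_rel K5_adj)"
    and col: "\<And>w. w \<in> V \<Longrightarrow> colorable (V - {w}) E 4"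
    and sym: "\<And>x y. E x y = E y x" and irr: "\<And>x. \<not> E x x"
    and "a \<in> V" "b \<in> V" "c \<in> V" "d \<in> V" "e \<in> V"
    and dist: "distinct [a,b,c,d,e]"
    and "E a b" "E a c" "E a d" "E a e" "E b c" "E b d" "E b e" "E c d" "E c e" "E d e"
  shows False
proof (cases "V = {a,b,c,d,e}")
  case True
  let ?f = "\<lambda>i. [a,b,c,d,e] ! i"
  have "inj_on ?f {0..<5}"
    by (rule inj_on_nth) (use dist in auto)
  moreover have "?f ` {0..<5} = V"
  proof -
    have "{0..<5::nat} = {0,1,2,3,4}" by auto
    then show ?thesis unfolding True by simp
  qed
  moreover have "\<forall>i<5. \<forall>j<5. E (?f i) (?f j) \<longleftrightarrow> adj_rel K5_adj i j"
    unfolding all5 using assms(10-) sym irr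
    by (simp add: adj_rel_def K5_adj_def)
  ultimately have "isomorphic_to V E 5 (adj_rel K5_adj)"
    unfolding isomorphic_to_def bij_betw_def by blast
  then show False using iso by blast
next
  case False
  then obtain w where w: "w \<in> V" "w \<notin> {a,b,c,d,e}" using assms(5-9) by blast
  obtain f :: "_ \<Rightarrow> nat" where f: "\<forall>v\<in>V - {w}. f v < 4" "\<forall>x\<in>V-{w}. \<forall>y\<in>V-{w}. E x y \<longrightarrow> f x \<noteq> f y"
    using col[OF w(1)] unfolding colorable_def by blast
  let ?S = "{a,b,c,d,e}"
  have S: "?S \<subseteq> V - {w}" using w assms(5-9) by auto
  have "inj_on f ?S"
    unfolding inj_on_def
  proof (intro ballI impI)
    fix x y assume xy: "x \<in> ?S" "y \<in> ?S" "f x = f y"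
    show "x = y"
    proof (rule ccontr)
      assume "x \<noteq> y"
      then have "E x y" using xy(1,2) assms(11-) sym by auto
      then show False using f(2) S xy by blast
    qed
  qed
  then have "card (f ` ?S) = 5" using dist by (simp add: card_image)
  moreover have "f ` ?S \<subseteq> {..<4}" using f(1) S by auto
  then have "card (f ` ?S) \<le> 4" by (metis card_lessThan card_mono finite_lessThan)
  ultimately show False by simp
qed


locale cfg =
  fixes V :: "'a set" and E :: "'a \<Rightarrow> 'a \<Rightarrow> bool"
  assumes nP5: "\<not> contains_induced V E 5 (adj_rel P5_adj)"
    and nCh: "\<not> contains_induced V E 5 (adj_rel chair_adj)"
    and iso: "\<not> isomorphic_to V E 5 (adj_rel K5_adj)"
    and col: "\<And>w. w \<in> V \<Longrightarrow> colorable (V - {w}) E 4"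
    and sym: "\<And>x y. E x y = E y x" and irr: "\<And>x. \<not> E x x"
begin

lemmas P5' = noP5[OF nP5 sym irr]
lemmas Ch' = noChair[OF nCh sym irr]
lemmas K5' = noK5[OF iso col sym irr]


lemma P5'':
  assumes "a \<in> V" "b \<in> V" "c \<in> V" "d \<in> V" "e \<in> V"
    "a \<noteq> b" "a \<noteq> c" "a \<noteq> d" "a \<noteq> e" "b \<noteq> c" "b \<noteq> d" "b \<noteq> e" "c \<noteq> d" "c \<noteq> e" "d \<noteq> e"
    "E a b" "E b c" "E c d" "E d e"
    "\<not> E a c" "\<not> E a d" "\<not> E a e" "\<not> E b d" "\<not> E b e" "\<not> E c e"
  shows False
  by (rule P5'[of a b c d e]) (use assms in auto)

lemma Ch'':
  assumes "a \<in> V" "b \<in> V" "c \<in> V" "d \<in> V" "e \<in> V"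
    "a \<noteq> b" "a \<noteq> c" "a \<noteq> d" "a \<noteq> e" "b \<noteq> c" "b \<noteq> d" "b \<noteq> e" "c \<noteq> d" "c \<noteq> e" "d \<noteq> e"
    "E a b" "E b c" "E c d" "E b e"
    "\<not> E a c" "\<not> E a d" "\<not> E a e" "\<not> E b d" "\<not> E c e" "\<not> E d e"
  shows False
  by (rule Ch'[of a b c d e]) (use assms in auto)

lemma K5'':
  assumes "a \<in> V" "b \<in> V" "c \<in> V" "d \<in> V" "e \<in> V"
    "a \<noteq> b" "a \<noteq> c" "a \<noteq> d" "a \<noteq> e" "b \<noteq> c" "b \<noteq> d" "b \<noteq> e" "c \<noteq> d" "c \<noteq> e" "d \<noteq> e"
    "E a b" "E a c" "E a d" "E a e" "E b c" "E b d" "E b e" "E c d" "E c e" "E d e"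
  shows False
  by (rule K5'[of a b c d e]) (use assms in auto)

lemma L1:
  assumes "c0 \<in> V" "c1 \<in> V" "c2 \<in> V" "c3 \<in> V" "c4 \<in> V" "a \<in> V" "b \<in> V" "u \<in> V"
    and "distinct [c0,c1,c2,c3,c4,a,b,u]"
    and "E c0 c1" "\<not> E c0 c2" "\<not> E c0 c3" "E c0 c4" "E c1 c2" "\<not> E c1 c3" "\<not> E c1 c4" "E c2 c3" "\<not> E c2 c4" "E c3 c4" "E a c0" "E a c2" "E a c3" "\<not> E a c1" "\<not> E a c4" "E b c0" "E b c2" "E b c3" "\<not> E b c1" "\<not> E b c4" "E u a" "\<not> E u b"
  shows "(E u c0 \<and> E u c2 \<and> E u c3 \<and> \<not> E u c1 \<and> \<not> E u c4) \<or> (E u c1 \<and> E u c2 \<and> E u c3 \<and> E u c4)"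
proof -
  have D: "c0 \<noteq> c1" "c0 \<noteq> c2" "c0 \<noteq> c3" "c0 \<noteq> c4" "c0 \<noteq> a" "c0 \<noteq> b" "c0 \<noteq> u" "c1 \<noteq> c0" "c1 \<noteq> c2" "c1 \<noteq> c3" "c1 \<noteq> c4" "c1 \<noteq> a" "c1 \<noteq> b" "c1 \<noteq> u" "c2 \<noteq> c0" "c2 \<noteq> c1" "c2 \<noteq> c3" "c2 \<noteq> c4" "c2 \<noteq> a" "c2 \<noteq> b" "c2 \<noteq> u" "c3 \<noteq> c0" "c3 \<noteq> c1" "c3 \<noteq> c2" "c3 \<noteq> c4" "c3 \<noteq> a" "c3 \<noteq> b" "c3 \<noteq> u" "c4 \<noteq> c0" "c4 \<noteq> c1" "c4 \<noteq> c2" "c4 \<noteq> c3" "c4 \<noteq> a" "c4 \<noteq> b" "c4 \<noteq> u" "a \<noteq> c0" "a \<noteq> c1" "a \<noteq> c2" "a \<noteq> c3" "a \<noteq> c4" "a \<noteq> b" "a \<noteq> u" "b \<noteq> c0" "b \<noteq> c1" "b \<noteq> c2" "b \<noteq> c3" "b \<noteq> c4" "b \<noteq> a" "b \<noteq> u" "u \<noteq> c0" "u \<noteq> c1" "u \<noteq> c2" "u \<noteq> c3" "u \<noteq> c4" "u \<noteq> a" "u \<noteq> b" using assms(9) by auto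
  show ?thesis
  apply (insert assms D)
  apply (cases "E u c0"; cases "E u c1"; cases "E u c2"; cases "E u c3"; cases "E u c4")
  subgoal by (simp add: sym)
  subgoal by (rule Ch''[of c4 c3 u c1 b, THEN FalseE]) (assumption | (subst sym, assumption))+
  subgoal by (rule P5''[of c1 u c4 c3 b, THEN FalseE]) (assumption | (subst sym, assumption))+
  subgoal by (rule P5''[of c1 u a c3 c4, THEN FalseE]) (assumption | (subst sym, assumption))+
  subgoal by (rule P5''[of c4 u c1 c2 b, THEN FalseE]) (assumption | (subst sym, assumption))+
  subgoal by (rule Ch''[of c4 c0 b c2 u, THEN FalseE]) (assumption | (subst sym, assumption))+
  subgoal by (rule P5''[of c1 u c4 c3 b, THEN FalseE]) (assumption | (subst sym, assumption))+
  subgoal by (rule P5''[of c1 u a c3 c4, THEN FalseE]) (assumption | (subst sym, assumption))+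
  subgoal by (rule Ch''[of c1 c2 u c4 b, THEN FalseE]) (assumption | (subst sym, assumption))+
  subgoal by (simp add: sym)
  subgoal by (rule Ch''[of c1 c0 b c3 u, THEN FalseE]) (assumption | (subst sym, assumption))+
  subgoal by (rule Ch''[of c1 c0 c4 c3 u, THEN FalseE]) (assumption | (subst sym, assumption))+
  subgoal by (rule P5''[of c1 c2 a u c4, THEN FalseE]) (assumption | (subst sym, assumption))+
  subgoal by (rule Ch''[of c4 c0 c1 c2 u, THEN FalseE]) (assumption | (subst sym, assumption))+
  subgoal by (rule P5''[of c1 c2 c3 c4 u, THEN FalseE]) (assumption | (subst sym, assumption))+
  subgoal by (rule P5''[of c2 c3 c4 c0 u, THEN FalseE]) (assumption | (subst sym, assumption))+
  subgoal by (simp add: sym)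
  subgoal by (rule P5''[of c4 c0 b c2 u, THEN FalseE]) (assumption | (subst sym, assumption))+
  subgoal by (rule P5''[of c1 u c4 c3 b, THEN FalseE]) (assumption | (subst sym, assumption))+
  subgoal by (rule P5''[of c0 c4 c3 c2 u, THEN FalseE]) (assumption | (subst sym, assumption))+
  subgoal by (rule P5''[of c2 b c0 c4 u, THEN FalseE]) (assumption | (subst sym, assumption))+
  subgoal by (rule Ch''[of c2 c1 c0 c4 u, THEN FalseE]) (assumption | (subst sym, assumption))+
  subgoal by (rule P5''[of c1 u c4 c3 b, THEN FalseE]) (assumption | (subst sym, assumption))+
  subgoal by (rule P5''[of c1 u a c3 c4, THEN FalseE]) (assumption | (subst sym, assumption))+
  subgoal by (rule P5''[of c1 c0 b c3 u, THEN FalseE]) (assumption | (subst sym, assumption))+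
  subgoal by (rule P5''[of c1 c0 c4 c3 u, THEN FalseE]) (assumption | (subst sym, assumption))+
  subgoal by (rule Ch''[of c1 c0 c4 u b, THEN FalseE]) (assumption | (subst sym, assumption))+
  subgoal by (rule P5''[of c0 c4 c3 c2 u, THEN FalseE]) (assumption | (subst sym, assumption))+
  subgoal by (rule P5''[of c0 c1 c2 c3 u, THEN FalseE]) (assumption | (subst sym, assumption))+
  subgoal by (rule P5''[of c0 c1 c2 c3 u, THEN FalseE]) (assumption | (subst sym, assumption))+
  subgoal by (rule P5''[of c1 c2 c3 c4 u, THEN FalseE]) (assumption | (subst sym, assumption))+
  subgoal by (rule Ch''[of c1 c0 a u c4, THEN FalseE]) (assumption | (subst sym, assumption))+
  done
qed

lemma LP3:
  assumes "c0 \<in> V" "c1 \<in> V" "c2 \<in> V" "c3 \<in> V" "c4 \<in> V" "a \<in> V" "b \<in> V" "c \<in> V" "p \<in> V"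
    and "distinct [c0,c1,c2,c3,c4,a,b,c,p]"
    and "E c0 c1" "\<not> E c0 c2" "\<not> E c0 c3" "E c0 c4" "E c1 c2" "\<not> E c1 c3" "\<not> E c1 c4" "E c2 c3" "\<not> E c2 c4" "E c3 c4" "E a c0" "E a c2" "E a c3" "\<not> E a c1" "\<not> E a c4" "E b c0" "E b c2" "E b c3" "\<not> E b c1" "\<not> E b c4" "E c c0" "E c c2" "E c c3" "\<not> E c c1" "\<not> E c c4" "E a b" "E b c" "\<not> E a c" "E p c1" "E p c2" "E p c3" "E p c4"
  shows "False"
proof -
  have D: "c0 \<noteq> c1" "c0 \<noteq> c2" "c0 \<noteq> c3" "c0 \<noteq> c4" "c0 \<noteq> a" "c0 \<noteq> b" "c0 \<noteq> c" "c0 \<noteq> p" "c1 \<noteq> c0" "c1 \<noteq> c2" "c1 \<noteq> c3" "c1 \<noteq> c4" "c1 \<noteq> a" "c1 \<noteq> b" "c1 \<noteq> c" "c1 \<noteq> p" "c2 \<noteq> c0" "c2 \<noteq> c1" "c2 \<noteq> c3" "c2 \<noteq> c4" "c2 \<noteq> a" "c2 \<noteq> b" "c2 \<noteq> c" "c2 \<noteq> p" "c3 \<noteq> c0" "c3 \<noteq> c1" "c3 \<noteq> c2" "c3 \<noteq> c4" "c3 \<noteq> a" "c3 \<noteq> b" "c3 \<noteq> c" "c3 \<noteq> p" "c4 \<noteq> c0" "c4 \<noteq> c1" "c4 \<noteq> c2" "c4 \<noteq> c3" "c4 \<noteq> a" "c4 \<noteq> b" "c4 \<noteq> c" "c4 \<noteq>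 p" "a \<noteq> c0" "a \<noteq> c1" "a \<noteq> c2" "a \<noteq> c3" "a \<noteq> c4" "a \<noteq> b" "a \<noteq> c" "a \<noteq> p" "b \<noteq> c0" "b \<noteq> c1" "b \<noteq> c2" "b \<noteq> c3" "b \<noteq> c4" "b \<noteq> a" "b \<noteq> c" "b \<noteq> p" "c \<noteq> c0" "c \<noteq> c1" "c \<noteq> c2" "c \<noteq> c3" "c \<noteq> c4" "c \<noteq> a" "c \<noteq> b" "c \<noteq> p" "p \<noteq> c0" "p \<noteq> c1" "p \<noteq> c2" "p \<noteq> c3" "p \<noteq> c4" "p \<noteq> a" "p \<noteq> b" "p \<noteq> c" using assms(10) by auto
  show ?thesis
  apply (insert assms D)
  apply (cases "E p c0"; cases "E p a"; cases "E p b"; cases "E p c")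
  subgoal by (rule K5''[of c2 c3 a b p, THEN FalseE]) (assumption | (subst sym, assumption))+
  subgoal by (rule Ch''[of c1 p b c c4, THEN FalseE]) (assumption | (subst sym, assumption))+
  subgoal by (rule Ch''[of c1 p a b c4, THEN FalseE]) (assumption | (subst sym, assumption))+
  subgoal by (rule P5''[of c1 p a b c, THEN FalseE]) (assumption | (subst sym, assumption))+
  subgoal by (rule Ch''[of c1 p b a c4, THEN FalseE]) (assumption | (subst sym, assumption))+
  subgoal by (rule Ch''[of c1 p b a c4, THEN FalseE]) (assumption | (subst sym, assumption))+
  subgoal by (rule P5''[of c1 p c b a, THEN FalseE]) (assumption | (subst sym, assumption))+
  subgoal by (rule Ch''[of a c2 p c4 c, THEN FalseE]) (assumption | (subst sym, assumption))+
  subgoal by (rule K5''[of c2 c3 a b p, THEN FalseE]) (assumption | (subst sym, assumption))+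
  subgoal by (rule Ch''[of c1 p b c c4, THEN FalseE]) (assumption | (subst sym, assumption))+
  subgoal by (rule Ch''[of c1 p a b c4, THEN FalseE]) (assumption | (subst sym, assumption))+
  subgoal by (rule P5''[of c1 p a b c, THEN FalseE]) (assumption | (subst sym, assumption))+
  subgoal by (rule Ch''[of c1 p b a c4, THEN FalseE]) (assumption | (subst sym, assumption))+
  subgoal by (rule Ch''[of c1 p b a c4, THEN FalseE]) (assumption | (subst sym, assumption))+
  subgoal by (rule P5''[of c1 p c b a, THEN FalseE]) (assumption | (subst sym, assumption))+
  subgoal by (rule Ch''[of a c0 c1 p c, THEN FalseE]) (assumption | (subst sym, assumption))+
  done
qed

lemma L2K2:
  assumes "c0 \<in> V" "c1 \<in> V" "c2 \<in> V" "c3 \<in> V" "c4 \<in> V" "a \<in> V" "b \<in> V" "c \<in> V" "d \<in> V" "p \<in> V"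
    and "distinct [c0,c1,c2,c3,c4,a,b,c,d,p]"
    and "E c0 c1" "\<not> E c0 c2" "\<not> E c0 c3" "E c0 c4" "E c1 c2" "\<not> E c1 c3" "\<not> E c1 c4" "E c2 c3" "\<not> E c2 c4" "E c3 c4" "E a c0" "E a c2" "E a c3" "\<not> E a c1" "\<not> E a c4" "E b c0" "E b c2" "E b c3" "\<not> E b c1" "\<not> E b c4" "E c c0" "E c c2" "E c c3" "\<not> E c c1" "\<not> E c c4" "E d c0" "E d c2" "E d c3" "\<not> E d c1" "\<not> E d c4" "E a b" "E c d" "\<not> E a c" "\<not> E a d" "\<not> E b c" "\<not> E b d" "E p c1" "E p c2" "E p c3" "E p c4"
  shows "False"
proof -
  have D: "c0 \<noteq> c1" "c0 \<noteq> c2" "c0 \<noteq> c3" "c0 \<noteq> c4" "c0 \<noteq> a" "c0 \<noteq> b" "c0 \<noteq> c" "c0 \<noteq> d" "c0 \<noteq> p" "c1 \<noteq> c0" "c1 \<noteq> c2" "c1 \<noteq> c3" "c1 \<noteq> c4" "c1 \<noteq> a" "c1 \<noteq> b" "c1 \<noteq> c" "c1 \<noteq> d" "c1 \<noteq> p" "c2 \<noteq> c0" "c2 \<noteq> c1" "c2 \<noteq> c3" "c2 \<noteq> c4" "c2 \<noteq> a" "c2 \<noteq> b" "c2 \<noteq> c" "c2 \<noteq> d" "c2 \<noteq> p" "c3 \<noteq> c0" "c3 \<noteq> c1" "c3 \<noteq> c2" "c3 \<noteq> c4" "c3 \<noteq> a" "c3 \<noteq> b" "c3 \<noteq> c" "c3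 \<noteq> d" "c3 \<noteq> p" "c4 \<noteq> c0" "c4 \<noteq> c1" "c4 \<noteq> c2" "c4 \<noteq> c3" "c4 \<noteq> a" "c4 \<noteq> b" "c4 \<noteq> c" "c4 \<noteq> d" "c4 \<noteq> p" "a \<noteq> c0" "a \<noteq> c1" "a \<noteq> c2" "a \<noteq> c3" "a \<noteq> c4" "a \<noteq> b" "a \<noteq> c" "a \<noteq> d" "a \<noteq> p" "b \<noteq> c0" "b \<noteq> c1" "b \<noteq> c2" "b \<noteq> c3" "b \<noteq> c4" "b \<noteq> a" "b \<noteq> c" "b \<noteq> d" "b \<noteq> p" "c \<noteq> c0" "c \<noteq> c1" "c \<noteq> c2" "c \<noteq> c3" "c \<noteq> c4" "c \<noteq> a" "c \<noteq> b" "c \<noteq> d" "c \<noteq> p" "d \<noteq> c0" "d \<noteq> c1" "d \<noteq> c2" "d \<noteq> c3" "d \<noteq> c4" "d \<noteq> a" "d \<noteq> b" "d \<noteq> c" "d \<noteq> p" "p \<noteq> c0" "p \<noteq> c1" "p \<noteq> c2" "p \<noteq> c3" "p \<noteq> c4" "p \<noteq> a" "p \<noteq> b" "p \<noteq> c" "p \<noteq> d" using assms(11) by auto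
  show ?thesis
  apply (insert assms D)
  apply (cases "E p c0"; cases "E p a"; cases "E p b"; cases "E p c"; cases "E p d")
  subgoal by (rule K5''[of c2 c3 a b p, THEN FalseE]) (assumption | (subst sym, assumption))+
  subgoal by (rule Ch''[of c1 p c d c4, THEN FalseE]) (assumption | (subst sym, assumption))+
  subgoal by (rule Ch''[of c1 p d c c4, THEN FalseE]) (assumption | (subst sym, assumption))+
  subgoal by (rule K5''[of c2 c3 a b p, THEN FalseE]) (assumption | (subst sym, assumption))+
  subgoal by (rule Ch''[of c1 p a b c4, THEN FalseE]) (assumption | (subst sym, assumption))+
  subgoal by (rule P5''[of b a p c d, THEN FalseE]) (assumption | (subst sym, assumption))+
  subgoal by (rule P5''[of b a p d c, THEN FalseE]) (assumption | (subst sym, assumption))+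
  subgoal by (rule Ch''[of c1 p a b c4, THEN FalseE]) (assumption | (subst sym, assumption))+
  subgoal by (rule Ch''[of c1 p b a c4, THEN FalseE]) (assumption | (subst sym, assumption))+
  subgoal by (rule P5''[of a b p c d, THEN FalseE]) (assumption | (subst sym, assumption))+
  subgoal by (rule P5''[of a b p d c, THEN FalseE]) (assumption | (subst sym, assumption))+
  subgoal by (rule Ch''[of c1 p b a c4, THEN FalseE]) (assumption | (subst sym, assumption))+
  subgoal by (rule K5''[of c2 c3 c d p, THEN FalseE]) (assumption | (subst sym, assumption))+
  subgoal by (rule Ch''[of c1 p c d c4, THEN FalseE]) (assumption | (subst sym, assumption))+
  subgoal by (rule Ch''[of c1 p d c c4, THEN FalseE]) (assumption | (subst sym, assumption))+
  subgoal by (rule Ch''[of a c2 p c4 c, THEN FalseE]) (assumption | (subst sym, assumption))+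
  subgoal by (rule K5''[of c2 c3 a b p, THEN FalseE]) (assumption | (subst sym, assumption))+
  subgoal by (rule Ch''[of c1 p c d c4, THEN FalseE]) (assumption | (subst sym, assumption))+
  subgoal by (rule Ch''[of c1 p d c c4, THEN FalseE]) (assumption | (subst sym, assumption))+
  subgoal by (rule K5''[of c2 c3 a b p, THEN FalseE]) (assumption | (subst sym, assumption))+
  subgoal by (rule Ch''[of c1 p a b c4, THEN FalseE]) (assumption | (subst sym, assumption))+
  subgoal by (rule P5''[of b a p c d, THEN FalseE]) (assumption | (subst sym, assumption))+
  subgoal by (rule P5''[of b a p d c, THEN FalseE]) (assumption | (subst sym, assumption))+
  subgoal by (rule Ch''[of c1 p a b c4, THEN FalseE]) (assumption | (subst sym, assumption))+
  subgoal by (rule Ch''[of c1 p b a c4, THEN FalseE]) (assumption | (subst sym, assumption))+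
  subgoal by (rule P5''[of a b p c d, THEN FalseE]) (assumption | (subst sym, assumption))+
  subgoal by (rule P5''[of a b p d c, THEN FalseE]) (assumption | (subst sym, assumption))+
  subgoal by (rule Ch''[of c1 p b a c4, THEN FalseE]) (assumption | (subst sym, assumption))+
  subgoal by (rule K5''[of c2 c3 c d p, THEN FalseE]) (assumption | (subst sym, assumption))+
  subgoal by (rule Ch''[of c1 p c d c4, THEN FalseE]) (assumption | (subst sym, assumption))+
  subgoal by (rule Ch''[of c1 p d c c4, THEN FalseE]) (assumption | (subst sym, assumption))+
  subgoal by (rule Ch''[of a c0 c1 p c, THEN FalseE]) (assumption | (subst sym, assumption))+
  done
qed

lemma LK2K1:
  assumes "c0 \<in> V" "c1 \<in> V" "c2 \<in> V" "c3 \<in> V" "c4 \<in> V" "a \<in> V" "b \<in> V" "c \<in> V" "d \<in> V" "p \<in> V"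
    and "distinct [c0,c1,c2,c3,c4,a,b,c,d,p]"
    and "E c0 c1" "\<not> E c0 c2" "\<not> E c0 c3" "E c0 c4" "E c1 c2" "\<not> E c1 c3" "\<not> E c1 c4" "E c2 c3" "\<not> E c2 c4" "E c3 c4" "E a c0" "E a c2" "E a c3" "\<not> E a c1" "\<not> E a c4" "E b c0" "E b c2" "E b c3" "\<not> E b c1" "\<not> E b c4" "E c c0" "E c c2" "E c c3" "\<not> E c c1" "\<not> E c c4" "E d c0" "E d c2" "E d c3" "\<not> E d c1" "\<not> E d c4" "E a b" "\<not> E a c" "\<not> E a d" "\<not> E b c" "\<not> E b d" "\<not> E c d" "E p c1" "E p c2" "E p c3" "E p c4" "E p c" "\<not> E p d"
  shows "False"
proof -
  have D: "c0 \<noteq> c1" "c0 \<noteq> c2" "c0 \<noteq> c3" "c0 \<noteq> c4" "c0 \<noteq> a" "c0 \<noteq> b" "c0 \<noteq> c" "c0 \<noteq> d" "c0 \<noteq> p" "c1 \<noteq> c0" "c1 \<noteq> c2" "c1 \<noteq> c3" "c1 \<noteq> c4" "c1 \<noteq> a" "c1 \<noteq> b" "c1 \<noteq> c" "c1 \<noteq> d" "c1 \<noteq> p" "c2 \<noteq> c0" "c2 \<noteq> c1" "c2 \<noteq> c3" "c2 \<noteq> c4" "c2 \<noteq> a" "c2 \<noteq> b" "c2 \<noteq> c" "c2 \<noteq> d" "c2 \<noteq> p" "c3 \<noteq> c0" "c3 \<noteq> c1" "c3 \<noteq> c2" "c3 \<noteq> c4" "c3 \<noteq> a" "c3 \<noteq>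 b" "c3 \<noteq> c" "c3 \<noteq> d" "c3 \<noteq> p" "c4 \<noteq> c0" "c4 \<noteq> c1" "c4 \<noteq> c2" "c4 \<noteq> c3" "c4 \<noteq> a" "c4 \<noteq> b" "c4 \<noteq> c" "c4 \<noteq> d" "c4 \<noteq> p" "a \<noteq> c0" "a \<noteq> c1" "a \<noteq> c2" "a \<noteq> c3" "a \<noteq> c4" "a \<noteq> b" "a \<noteq> c" "a \<noteq> d" "a \<noteq> p" "b \<noteq> c0" "b \<noteq> c1" "b \<noteq> c2" "b \<noteq> c3" "b \<noteq> c4" "b \<noteq> a" "b \<noteq> c" "b \<noteq> d" "b \<noteq> p" "c \<noteq> c0" "c \<noteq> c1" "c \<noteq> c2" "c \<noteq> c3" "c \<noteq> c4" "c \<noteq> a" "c \<noteq> b" "c \<noteq> d" "c \<noteq> p" "d \<noteq> c0" "d \<noteq> c1" "d \<noteq> c2" "d \<noteq> c3" "d \<noteq> c4" "d \<noteq> a" "d \<noteq> b" "d \<noteq> c" "d \<noteq> p" "p \<noteq> c0" "p \<noteq> c1" "p \<noteq> c2" "p \<noteq> c3" "p \<noteq> c4" "p \<noteq> a" "p \<noteq> b" "p \<noteq> c" "p \<noteq> d" using assms(11) by auto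
  show ?thesis
  apply (insert assms D)
  apply (cases "E p c0"; cases "E p a"; cases "E p b")
  subgoal by (rule K5''[of c2 c3 a b p, THEN FalseE]) (assumption | (subst sym, assumption))+
  subgoal by (rule Ch''[of c1 p a b c4, THEN FalseE]) (assumption | (subst sym, assumption))+
  subgoal by (rule Ch''[of c1 p b a c4, THEN FalseE]) (assumption | (subst sym, assumption))+
  subgoal by (rule Ch''[of a c2 p c4 d, THEN FalseE]) (assumption | (subst sym, assumption))+
  subgoal by (rule K5''[of c2 c3 a b p, THEN FalseE]) (assumption | (subst sym, assumption))+
  subgoal by (rule Ch''[of c1 p a b c4, THEN FalseE]) (assumption | (subst sym, assumption))+
  subgoal by (rule Ch''[of c1 p b a c4, THEN FalseE]) (assumption | (subst sym, assumption))+
  subgoal by (rule Ch''[of a c0 c1 p d, THEN FalseE]) (assumption | (subst sym, assumption))+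
  done
qed

lemma L3K1:
  assumes "c0 \<in> V" "c1 \<in> V" "c2 \<in> V" "c3 \<in> V" "c4 \<in> V" "c \<in> V" "d \<in> V" "e \<in> V" "p \<in> V"
    and "distinct [c0,c1,c2,c3,c4,c,d,e,p]"
    and "E c0 c1" "\<not> E c0 c2" "\<not> E c0 c3" "E c0 c4" "E c1 c2" "\<not> E c1 c3" "\<not> E c1 c4" "E c2 c3" "\<not> E c2 c4" "E c3 c4" "E c c0" "E c c2" "E c c3" "\<not> E c c1" "\<not> E c c4" "E d c0" "E d c2" "E d c3" "\<not> E d c1" "\<not> E d c4" "E e c0" "E e c2" "E e c3" "\<not> E e c1" "\<not> E e c4" "\<not> E c d" "\<not> E c e" "\<not> E d e" "E p c1" "E p c2" "E p c3" "E p c4" "E p c" "\<not> E p d"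
  shows "E p e"
proof -
  have D: "c0 \<noteq> c1" "c0 \<noteq> c2" "c0 \<noteq> c3" "c0 \<noteq> c4" "c0 \<noteq> c" "c0 \<noteq> d" "c0 \<noteq> e" "c0 \<noteq> p" "c1 \<noteq> c0" "c1 \<noteq> c2" "c1 \<noteq> c3" "c1 \<noteq> c4" "c1 \<noteq> c" "c1 \<noteq> d" "c1 \<noteq> e" "c1 \<noteq> p" "c2 \<noteq> c0" "c2 \<noteq> c1" "c2 \<noteq> c3" "c2 \<noteq> c4" "c2 \<noteq> c" "c2 \<noteq> d" "c2 \<noteq> e" "c2 \<noteq> p" "c3 \<noteq> c0" "c3 \<noteq> c1" "c3 \<noteq> c2" "c3 \<noteq> c4" "c3 \<noteq> c" "c3 \<noteq> d" "c3 \<noteq> e" "c3 \<noteq> p" "c4 \<noteq> c0" "c4 \<noteq> c1" "c4 \<noteq> c2" "c4 \<noteq> c3" "c4 \<noteq> c" "c4 \<noteq> d" "c4 \<noteq> e" "c4 \<noteq> p" "c \<noteq> c0" "c \<noteq> c1" "c \<noteq> c2" "c \<noteq> c3" "c \<noteq> c4" "c \<noteq> d" "c \<noteq> e" "c \<noteq> p" "d \<noteq> c0" "d \<noteq> c1" "d \<noteq> c2" "d \<noteq> c3" "d \<noteq> c4" "d \<noteq> c" "d \<noteq> e" "d \<noteq> p" "e \<noteq> c0" "e \<noteq> c1" "e \<noteq> c2" "e \<noteq> c3" "e \<noteq> c4" "e \<noteq> c" "e \<noteq> d" "e \<noteq> p" "p \<noteq> c0" "p \<noteq> c1" "p \<noteq>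 c2" "p \<noteq> c3" "p \<noteq> c4" "p \<noteq> c" "p \<noteq> d" "p \<noteq> e" using assms(10) by auto
  show ?thesis
  apply (insert assms D)
  apply (cases "E p c0"; cases "E p e")
  subgoal by (simp add: sym)
  subgoal by (rule Ch''[of d c2 p c4 e, THEN FalseE]) (assumption | (subst sym, assumption))+
  subgoal by (simp add: sym)
  subgoal by (rule Ch''[of d c0 c1 p e, THEN FalseE]) (assumption | (subst sym, assumption))+
  done
qed

lemma LPQ:
  assumes "c0 \<in> V" "c1 \<in> V" "c2 \<in> V" "c3 \<in> V" "c4 \<in> V" "c \<in> V" "d \<in> V" "p \<in> V" "q \<in> V"
    and "distinct [c0,c1,c2,c3,c4,c,d,p,q]"
    and "E c0 c1" "\<not> E c0 c2" "\<not> E c0 c3" "E c0 c4" "E c1 c2" "\<not> E c1 c3" "\<not> E c1 c4" "E c2 c3" "\<not> E c2 c4" "E c3 c4" "E c c0" "E c c2" "E c c3" "\<not> E c c1" "\<not> E c c4" "E d c0" "E d c2" "E d c3" "\<not> E d c1" "\<not> E d c4" "\<not> E c d" "E p c1" "E p c2" "E p c3" "E p c4" "E q c1" "E q c2" "E q c3" "E q c4" "E p c" "\<not> E p d" "E q d" "\<not> E q c" "\<not> E p q"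
  shows "False"
proof -
  have D: "c0 \<noteq> c1" "c0 \<noteq> c2" "c0 \<noteq> c3" "c0 \<noteq> c4" "c0 \<noteq> c" "c0 \<noteq> d" "c0 \<noteq> p" "c0 \<noteq> q" "c1 \<noteq> c0" "c1 \<noteq> c2" "c1 \<noteq> c3" "c1 \<noteq> c4" "c1 \<noteq> c" "c1 \<noteq> d" "c1 \<noteq> p" "c1 \<noteq> q" "c2 \<noteq> c0" "c2 \<noteq> c1" "c2 \<noteq> c3" "c2 \<noteq> c4" "c2 \<noteq> c" "c2 \<noteq> d" "c2 \<noteq> p" "c2 \<noteq> q" "c3 \<noteq> c0" "c3 \<noteq> c1" "c3 \<noteq> c2" "c3 \<noteq> c4" "c3 \<noteq> c" "c3 \<noteq> d" "c3 \<noteq> p" "c3 \<noteq> q" "c4 \<noteq> c0" "c4 \<noteq> c1" "c4 \<noteq> c2" "c4 \<noteq> c3" "c4 \<noteq> c" "c4 \<noteq> d" "c4 \<noteq> p" "c4 \<noteq> q" "c \<noteq> c0" "c \<noteq> c1" "c \<noteq> c2" "c \<noteq> c3" "c \<noteq> c4" "c \<noteq> d" "c \<noteq> p" "c \<noteq> q" "d \<noteq> c0" "d \<noteq> c1" "d \<noteq> c2" "d \<noteq> c3" "d \<noteq> c4" "d \<noteq> c" "d \<noteq> p" "d \<noteq> q" "p \<noteq> c0" "p \<noteq> c1" "p \<noteq> c2" "p \<noteq> c3" "p \<noteq> c4" "p \<noteq> c" "p \<noteq> d" "p \<noteq> q" "q \<noteq> c0" "q \<noteq> c1" "q \<noteq>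 c2" "q \<noteq> c3" "q \<noteq> c4" "q \<noteq> c" "q \<noteq> d" "q \<noteq> p" using assms(10) by auto
  show ?thesis
  apply (insert assms D)
  apply (cases "E p c0"; cases "E q c0")
  subgoal by (rule P5''[of c p c1 q d, THEN FalseE]) (assumption | (subst sym, assumption))+
  subgoal by (rule P5''[of c p c1 q d, THEN FalseE]) (assumption | (subst sym, assumption))+
  subgoal by (rule P5''[of c p c1 q d, THEN FalseE]) (assumption | (subst sym, assumption))+
  subgoal by (rule P5''[of c p c1 q d, THEN FalseE]) (assumption | (subst sym, assumption))+
  done
qed

end



lemma pig4:
  fixes w x y z t :: nat
  assumes "t \<noteq> w" "t \<noteq> x" "y \<noteq> w" "y \<noteq> x" "z \<noteq> w" "z \<noteq> x" "w \<noteq> x" "y \<noteq> z"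
    "t < 4" "y < 4" "z < 4" "w < 4" "x < 4"
  shows "t = y \<or> t = z"
proof -
  have S: "{w,x,y,z} \<subseteq> {..<4}" using assms by auto
  have "card {w,x,y,z} = 4" using assms by auto
  then have "{w,x,y,z} = {..<4}" using S by (simp add: card_subset_eq)
  moreover have "t \<in> {..<4}" using assms by auto
  ultimately show ?thesis using assms by auto
qed

lemma C5_rot:
  assumes C: "induced_C5 V E v" and i5: "i < (5::nat)"
  shows "v (i mod 5) \<in> V \<and> v ((i+1) mod 5) \<in> V \<and> v ((i+2) mod 5) \<in> V \<and> v ((i+3) mod 5) \<in> V \<and> v ((i+4) mod 5) \<in> V
    \<and> distinct [v (i mod 5), v ((i+1) mod 5), v ((i+2) mod 5), v ((i+3) mod 5), v ((i+4) mod 5)]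
    \<and> E (v (i mod 5)) (v ((i+1) mod 5)) \<and> \<not> E (v (i mod 5)) (v ((i+2) mod 5)) \<and> \<not> E (v (i mod 5)) (v ((i+3) mod 5))
    \<and> E (v (i mod 5)) (v ((i+4) mod 5)) \<and> E (v ((i+1) mod 5)) (v ((i+2) mod 5)) \<and> \<not> E (v ((i+1) mod 5)) (v ((i+3) mod 5))
    \<and> \<not> E (v ((i+1) mod 5)) (v ((i+4) mod 5)) \<and> E (v ((i+2) mod 5)) (v ((i+3) mod 5)) \<and> \<not> E (v ((i+2) mod 5)) (v ((i+4) mod 5))
    \<and> E (v ((i+3) mod 5)) (v ((i+4) mod 5))
    \<and> v ` {0..<5} = {v (i mod 5), v ((i+1) mod 5), v ((i+2) mod 5), v ((i+3) mod 5), v ((i+4) mod 5)}"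
proof -
  have inj: "inj_on v {0..<5}" and sub: "v ` {0..<5} \<subseteq> V"
    and adj: "\<forall>p<5. \<forall>q<5. E (v p) (v q) \<longleftrightarrow> (q = (p + 1) mod 5 \<or> p = (q + 1) mod 5)"
    using C unfolding induced_C5_def by blast+
  have adj': "E (v 0) (v 1)" "E (v 1) (v 2)" "E (v 2) (v 3)" "E (v 3) (v 4)" "E (v 4) (v 0)"
     "E (v 1) (v 0)" "E (v 2) (v 1)" "E (v 3) (v 2)" "E (v 4) (v 3)" "E (v 0) (v 4)"
     "\<not> E (v 0) (v 2)" "\<not> E (v 0) (v 3)" "\<not> E (v 1) (v 3)" "\<not> E (v 1) (v 4)" "\<not> E (v 2) (v 4)"
     "\<not> E (v 2) (v 0)" "\<not> E (v 3) (v 0)" "\<not> E (v 3) (v 1)" "\<not> E (v 4) (v 1)" "\<not> E (v 4) (v 2)"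
    using adj unfolding all5 by simp_all
  have "distinct (map v [0..<5])" using inj by (simp add: distinct_map atLeastLessThan_upt[symmetric])
  then have d: "distinct [v 0, v 1, v 2, v 3, v 4]" by (simp add: upt_rec eval_nat_numeral)
  have dd: "v 0 \<noteq> v 1" "v 0 \<noteq> v 2" "v 0 \<noteq> v 3" "v 0 \<noteq> v 4" "v 1 \<noteq> v 0" "v 1 \<noteq> v 2" "v 1 \<noteq> v 3" "v 1 \<noteq> v 4" "v 2 \<noteq> v 0" "v 2 \<noteq> v 1" "v 2 \<noteq> v 3" "v 2 \<noteq> v 4" "v 3 \<noteq> v 0" "v 3 \<noteq> v 1" "v 3 \<noteq> v 2" "v 3 \<noteq> v 4" "v 4 \<noteq> v 0" "v 4 \<noteq> v 1" "v 4 \<noteq> v 2" "v 4 \<noteq> v 3" using d by auto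
  have im: "v ` {0..<5} = {v 0, v 1, v 2, v 3, v 4}"
  proof -
    have "{0..<5::nat} = {0,1,2,3,4}" by auto
    then show ?thesis by simp
  qed
  have inV: "v 0 \<in> V" "v 1 \<in> V" "v 2 \<in> V" "v 3 \<in> V" "v 4 \<in> V" using sub im by auto
  consider "i = 0" | "i = 1" | "i = 2" | "i = 3" | "i = 4" using i5 by linarith
  then show ?thesis
  proof cases
    assume "i = 0"
    then have "i mod 5 = 0" "(i+1) mod 5 = 1" "(i+2) mod 5 = 2" "(i+3) mod 5 = 3" "(i+4) mod 5 = 4" by simp_all
    then show ?thesis using adj' d dd im inV by (simp only:) (simp add: insert_commute)
  next
    assume "i = 1"
    then have "i mod 5 = 1" "(i+1) mod 5 = 2" "(i+2) mod 5 = 3" "(i+3) mod 5 = 4" "(i+4) mod 5 = 0" by simp_all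
    then show ?thesis using adj' d dd im inV by (simp only:) (simp add: insert_commute)
  next
    assume "i = 2"
    then have "i mod 5 = 2" "(i+1) mod 5 = 3" "(i+2) mod 5 = 4" "(i+3) mod 5 = 0" "(i+4) mod 5 = 1" by simp_all
    then show ?thesis using adj' d dd im inV by (simp only:) (simp add: insert_commute)
  next
    assume "i = 3"
    then have "i mod 5 = 3" "(i+1) mod 5 = 4" "(i+2) mod 5 = 0" "(i+3) mod 5 = 1" "(i+4) mod 5 = 2" by simp_all
    then show ?thesis using adj' d dd im inV by (simp only:) (simp add: insert_commute)
  next
    assume "i = 4"
    then have "i mod 5 = 4" "(i+1) mod 5 = 0" "(i+2) mod 5 = 1" "(i+3) mod 5 = 2" "(i+4) mod 5 = 3" by simp_all
    then show ?thesis using adj' d dd im inV by (simp only:) (simp add: insert_commute)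
  qed
qed



theorem mainTheorem16:
  fixes V :: "'a set" and E :: "'a \<Rightarrow> 'a \<Rightarrow> bool" and v :: "nat \<Rightarrow> 'a"
  assumes "simple_graph V E"
    and "vertex_critical V E 5"
    and "\<not> contains_induced V E 5 (adj_rel P5_adj)"
    and "\<not> contains_induced V E 5 (adj_rel chair_adj)"
    and "\<forall>A\<in>family_F. \<not> isomorphic_to V E (length A) (adj_rel A)"
    and "induced_C5 V E v"
  shows "\<forall>i<5. card (S23 V E v i) \<le> 3"
proof (intro allI impI)
  fix i :: nat assume i5: "i < 5"
  have finV: "finite V" and inV: "\<And>x y. E x y \<Longrightarrow> x \<in> V \<and> y \<in> V"
    and symE: "\<And>x y. E x y = E y x" and irr: "\<And>x. \<not> E x x"
    using assms(1) unfolding simple_graph_def by blast+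
  have nc: "\<not> colorable V E 4" and col: "\<And>w. w \<in> V \<Longrightarrow> colorable (V - {w}) E 4"
    using crit_facts[OF finV irr assms(2)] by blast+
  have iso0: "\<not> isomorphic_to V E (length K5_adj) (adj_rel K5_adj)"
    using assms(5) by (simp add: family_F_def)
  have "length K5_adj = 5" by (simp add: K5_adj_def)
  then have iso: "\<not> isomorphic_to V E 5 (adj_rel K5_adj)" using iso0 by simp
  interpret G: cfg V E
    using assms(3,4) iso col symE irr by unfold_locales auto
  define c0 where "c0 = v (i mod 5)"
  define c1 where "c1 = v ((i+1) mod 5)"
  define c2 where "c2 = v ((i+2) mod 5)"
  define c3 where "c3 = v ((i+3) mod 5)"
  define c4 where "c4 = v ((i+4) mod 5)"
  have CV: "c0 \<in> V" "c1 \<in> V" "c2 \<in> V" "c3 \<in> V" "c4 \<in> V"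
    and Cd: "distinct [c0,c1,c2,c3,c4]"
    and Ce: "E c0 c1" "\<not> E c0 c2" "\<not> E c0 c3" "E c0 c4" "E c1 c2" "\<not> E c1 c3" "\<not> E c1 c4" "E c2 c3" "\<not> E c2 c4" "E c3 c4"
    and Cim: "v ` {0..<5} = {c0,c1,c2,c3,c4}"
    using C5_rot[OF assms(6) i5] unfolding c0_def c1_def c2_def c3_def c4_def by blast+
  define A where "A = S23 V E v i"
  have dC: "c0 \<noteq> c1" "c0 \<noteq> c2" "c0 \<noteq> c3" "c0 \<noteq> c4" "c1 \<noteq> c2" "c1 \<noteq> c3" "c1 \<noteq> c4"
     "c2 \<noteq> c3" "c2 \<noteq> c4" "c3 \<noteq> c4" using Cd by auto
  have memA: "z \<in> A \<longleftrightarrow> z \<in> V \<and> z \<noteq> c0 \<and> z \<noteq> c1 \<and> z \<noteq> c2 \<and> z \<noteq> c3 \<and> z \<noteq> c4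
      \<and> E z c0 \<and> E z c2 \<and> E z c3 \<and> \<not> E z c1 \<and> \<not> E z c4" for z
  proof -
    have "z \<in> A \<longleftrightarrow> z \<in> V \<and> z \<notin> {c0,c1,c2,c3,c4} \<and> {w \<in> {c0,c1,c2,c3,c4}. E z w} = {c3, c0, c2}"
      unfolding A_def S23_def Cim c0_def[symmetric] c2_def[symmetric] c3_def[symmetric] by blast
    moreover have "{w \<in> {c0,c1,c2,c3,c4}. E z w} = {c3, c0, c2} \<longleftrightarrow>
        E z c0 \<and> E z c2 \<and> E z c3 \<and> \<not> E z c1 \<and> \<not> E z c4" (is "?L = ?R")
    proof
      assume L: ?L
      have "c0 \<in> {w \<in> {c0,c1,c2,c3,c4}. E z w}" "c2 \<in> {w \<in> {c0,c1,c2,c3,c4}. E z w}"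
        "c3 \<in> {w \<in> {c0,c1,c2,c3,c4}. E z w}" "c1 \<notin> {w \<in> {c0,c1,c2,c3,c4}. E z w}"
        "c4 \<notin> {w \<in> {c0,c1,c2,c3,c4}. E z w}"
        unfolding L using dC by auto
      then show ?R by blast
    next
      assume ?R then show ?L using dC by auto
    qed
    ultimately show ?thesis by blast
  qed
  show "card A \<le> 3"
  proof (rule ccontr)
    assume "\<not> card A \<le> 3"
    then have c4A: "4 \<le> card A" by simp
    have AsubV: "A \<subseteq> V" using memA by blast
    have Af: "z \<in> V" "z \<noteq> c0" "z \<noteq> c1" "z \<noteq> c2" "z \<noteq> c3" "z \<noteq> c4"
      "E z c0" "E z c2" "E z c3" "\<not> E z c1" "\<not> E z c4" if "z \<in> A" for z
      using memA that by blast+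
    define TU where "TU p \<longleftrightarrow> E p c1 \<and> E p c2 \<and> E p c3 \<and> E p c4" for p
    have TUf: "p \<noteq> c0" "p \<noteq> c1" "p \<noteq> c2" "p \<noteq> c3" "p \<noteq> c4" "p \<notin> A"
      "E p c1" "E p c2" "E p c3" "E p c4" if "TU p" for p
    proof -
      have e: "E p c1" "E p c2" "E p c3" "E p c4" using that unfolding TU_def by auto
      then show "p \<noteq> c1" "p \<noteq> c2" "p \<noteq> c3" "p \<noteq> c4" using irr by auto
      show "p \<noteq> c0" using e(2) Ce(2) by auto
      show "p \<notin> A" using e(1) memA by blast
      show "E p c1" "E p c2" "E p c3" "E p c4" using e by auto
    qed
    have L1': "u \<in> A \<or> TU u" if "a \<in> A" "b \<in> A" "u \<in> V" "u \<notin> {c0,c1,c2,c3,c4}" "E u a" "\<not> E u b" "u \<noteq> b" for a b u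
    proof -
      have ab': "a \<noteq> b" using that by auto
      have ua: "u \<noteq> a" using that irr by auto
      have "(E u c0 \<and> E u c2 \<and> E u c3 \<and> \<not> E u c1 \<and> \<not> E u c4) \<or> (E u c1 \<and> E u c2 \<and> E u c3 \<and> E u c4)"
        proof -
          have N: "c0 \<noteq> c1" "c0 \<noteq> c2" "c0 \<noteq> c3" "c0 \<noteq> c4" "c0 \<noteq> a" "c0 \<noteq> b" "c0 \<noteq> u" "c1 \<noteq> c2" "c1 \<noteq> c3" "c1 \<noteq> c4" "c1 \<noteq> a" "c1 \<noteq> b" "c1 \<noteq> u" "c2 \<noteq> c3" "c2 \<noteq> c4" "c2 \<noteq> a" "c2 \<noteq> b" "c2 \<noteq> u" "c3 \<noteq> c4" "c3 \<noteq> a" "c3 \<noteq> b" "c3 \<noteq> u" "c4 \<noteq> a" "c4 \<noteq> b" "c4 \<noteq> u" "a \<noteq> b" "a \<noteq> u" "b \<noteq> u" using Af[OF that(1)] Af[OF that(2)] that dC ab' ua irr by blast+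
          show ?thesis by (rule G.L1[of c0 c1 c2 c3 c4 a b u]) (use Af[OF that(1)] Af[OF that(2)] that dC N in \<open>simp_all add: CV Ce\<close>)
        qed
      then show ?thesis using memA that unfolding TU_def by auto
    qed
    have TF: False if "a \<in> A" "b \<in> A" "c \<in> A" "E a b" "E b c" "E a c" for a b c
    proof -
      have "a \<noteq> b" "b \<noteq> c" "a \<noteq> c" using that irr by auto
      then show False using Af[OF that(1)] Af[OF that(2)] Af[OF that(3)] that CV Ce
        by (intro G.K5''[of a b c c2 c3]) auto
    qed
    have case1: False if ab: "a \<in> A" "b \<in> A" "E a b" and z0: "z0 \<in> A" "z0 \<noteq> a" "z0 \<noteq> b"
      and noTU: "\<forall>p\<in>V. \<not> TU p" for a b z0
    proof -
      have unif: "E z' w" if zz: "z \<in> A" "z' \<in> A" "w \<notin> A" "E z w" for z z' w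
      proof (rule ccontr)
        assume nz: "\<not> E z' w"
        have wV: "w \<in> V" using inV zz(4) by blast
        show False
        proof (cases "w \<in> {c0,c1,c2,c3,c4}")
          case True
          then show False using Af[OF zz(1)] Af[OF zz(2)] zz(4) nz by auto
        next
          case False
          have "w \<noteq> z'" using zz by auto
          moreover have "E w z" "\<not> E w z'" using zz(4) nz symE by blast+
          ultimately have "w \<in> A \<or> TU w" using zz wV False by (intro L1'[of z z' w]) auto
          then show False using zz wV noTU by blast
        qed
      qed
      obtain g :: "'a \<Rightarrow> nat" where g: "\<forall>x\<in>V-{c0}. g x < 4" "\<forall>x\<in>V-{c0}. \<forall>y\<in>V-{c0}. E x y \<longrightarrow> g x \<noteq> g y"
        using col[OF CV(1)] unfolding colorable_def by blast
      obtain f :: "'a \<Rightarrow> nat" where f: "\<forall>x\<in>V-{z0}. f x < 4" "\<forall>x\<in>V-{z0}. \<forall>y\<in>V-{z0}. E x y \<longrightarrow> f x \<noteq> f y"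
        using col[OF Af(1)[OF z0(1)]] unfolding colorable_def by blast
      have gA: "g z = g a \<or> g z = g b" if "z \<in> A" for z
      proof -
        have V0: "z \<in> V-{c0}" "a \<in> V-{c0}" "b \<in> V-{c0}" "c2 \<in> V-{c0}" "c3 \<in> V-{c0}"
          using Af[OF that] Af[OF ab(1)] Af[OF ab(2)] CV dC by auto
        have "g z \<noteq> g c2" "g z \<noteq> g c3" "g a \<noteq> g c2" "g a \<noteq> g c3" "g b \<noteq> g c2" "g b \<noteq> g c3"
          "g c2 \<noteq> g c3" "g a \<noteq> g b"
          using g(2) V0 Af[OF that] Af[OF ab(1)] Af[OF ab(2)] Ce ab(3) by blast+
        moreover have "g z < 4" "g a < 4" "g b < 4" "g c2 < 4" "g c3 < 4" using g(1) V0 by blast+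
        ultimately show ?thesis using pig4[of "g z" "g c2" "g c3" "g a" "g b"] by blast
      qed
      have gab: "g a \<noteq> g b" using g(2) ab Af[OF ab(1)] Af[OF ab(2)] by blast
      have fab: "f a \<noteq> f b" "f a < 4" "f b < 4" using f ab z0 Af[OF ab(1)] Af[OF ab(2)] by blast+
      define h where "h x = (if x \<in> A - {a,b} then (if g x = g a then f a else f b) else f x)" for x
      have hA: "h x \<in> {f a, f b}" if "x \<in> A - {a,b}" for x using that unfolding h_def by auto
      have mixed: "h x \<noteq> h y" if xy: "x \<in> A - {a,b}" "y \<in> V" "y \<notin> A - {a,b}" "E x y" for x y
      proof (cases "y \<in> A")
        case True
        then have "y = a \<or> y = b" using xy by blast
        then show ?thesis
        proof
          assume ya: "y = a"
          have "x \<noteq> c0" "a \<noteq> c0" using Af(2) xy(1) ab(1) by blast+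
          then have "x \<in> V - {c0}" "a \<in> V - {c0}" using Af(1) xy(1) ab(1) by blast+
          then have "g x \<noteq> g a" using g(2) xy(4) ya by blast
          then have "g x = g b" using gA xy by blast
          then show ?thesis using ya xy fab gab unfolding h_def by auto
        next
          assume yb: "y = b"
          have "x \<noteq> c0" "b \<noteq> c0" using Af(2) xy(1) ab(2) by blast+
          then have "x \<in> V - {c0}" "b \<in> V - {c0}" using Af(1) xy(1) ab(2) by blast+
          then have "g x \<noteq> g b" using g(2) xy(4) yb by blast
          then have "g x = g a" using gA xy by blast
          then show ?thesis using yb xy fab ab(3) unfolding h_def by auto
        qed
      next
        case False
        have "E a y" "E b y" using unif[of x a y] unif[of x b y] xy False ab by auto
        moreover have "y \<in> V - {z0}" "a \<in> V - {z0}" "b \<in> V - {z0}" using xy False z0 Af[OF ab(1)] Af[OF ab(2)] by auto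
        ultimately have "f a \<noteq> f y" "f b \<noteq> f y" using f(2) by blast+
        moreover have "h y = f y" using xy unfolding h_def by auto
        ultimately show ?thesis using hA[OF xy(1)] by auto
      qed
      have "colorable V E 4" unfolding colorable_def
      proof (intro exI[of _ h] conjI ballI impI)
        fix x assume xV: "x \<in> V"
        show "h x < 4"
        proof (cases "x \<in> A - {a,b}")
          case True then show ?thesis using hA[OF True] fab by auto
        next
          case False then have "x \<in> V - {z0}" using xV z0 by auto
          then show ?thesis using f(1) False unfolding h_def by auto
        qed
      next
        fix x y assume xy: "x \<in> V" "y \<in> V" "E x y"
        show "h x \<noteq> h y"
        proof (cases "x \<in> A - {a,b}")
          case xA: True
          show ?thesis
          proof (cases "y \<in> A - {a,b}")
            case yA: True
            have "x \<noteq> c0" "y \<noteq> c0" using Af(2) xA yA by blast+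
            then have "x \<in> V - {c0}" "y \<in> V - {c0}" using xy by blast+
            then have "g x \<noteq> g y" using g(2) xy(3) by blast
            moreover have "g x = g a \<or> g x = g b" "g y = g a \<or> g y = g b" using gA xA yA by blast+
            ultimately have "(g x = g a \<and> g y = g b) \<or> (g x = g b \<and> g y = g a)" by auto
            then show ?thesis using xA yA fab gab unfolding h_def by auto
          next
            case False then show ?thesis using mixed xA xy by blast
          qed
        next
          case xA: False
          show ?thesis
          proof (cases "y \<in> A - {a,b}")
            case True
            have "E y x" using xy symE by blast
            then have "h y \<noteq> h x" using mixed[of y x] True xA xy by blast
            then show ?thesis by simp
          next
            case False
            then have "x \<in> V - {z0}" "y \<in> V - {z0}" using xA xy z0 by auto
            then show ?thesis using f(2) xA False xy unfolding h_def by auto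
          qed
        qed
      qed
      then show False using nc by blast
    qed
    have finA: "finite A" using AsubV finV finite_subset by blast
    show False
    proof (cases "\<exists>a b c. a \<in> A \<and> b \<in> A \<and> c \<in> A \<and> E a b \<and> E b c \<and> a \<noteq> c")
      case True
      then obtain a b c where abc: "a \<in> A" "b \<in> A" "c \<in> A" "E a b" "E b c" "a \<noteq> c" by blast
      have nac: "\<not> E a c" using TF[of a b c] abc by blast
      have d3: "a \<noteq> b" "b \<noteq> c" using abc irr by auto
      have noTU: "\<forall>p\<in>V. \<not> TU p"
      proof (intro ballI notI)
        fix p assume pV: "p \<in> V" and tp: "TU p"
        show False
          proof -
            have N: "c0 \<noteq> c1" "c0 \<noteq> c2" "c0 \<noteq> c3" "c0 \<noteq> c4" "c0 \<noteq> a" "c0 \<noteq> b" "c0 \<noteq> c" "c0 \<noteq> p" "c1 \<noteq> c2" "c1 \<noteq> c3" "c1 \<noteq> c4" "c1 \<noteq> a" "c1 \<noteq> b" "c1 \<noteq> c" "c1 \<noteq> p" "c2 \<noteq> c3" "c2 \<noteq> c4" "c2 \<noteq> a" "c2 \<noteq> b" "c2 \<noteq> c" "c2 \<noteq> p" "c3 \<noteq> c4" "c3 \<noteq> a" "c3 \<noteq> b" "c3 \<noteq> c" "c3 \<noteq> p" "c4 \<noteq> a" "c4 \<noteq> b" "c4 \<noteq> c" "c4 \<noteq> p" "a \<noteq> b" "a \<noteq> c" "a \<noteq> p" "b \<noteq> c" "b \<noteq> p" "c \<noteq> p" using Af[OF abc(1)] Af[OF abc(2)] Af[OF abc(3)]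 TUf[OF tp] abc nac d3 pV dC irr by blast+
            show ?thesis by (rule G.LP3[of c0 c1 c2 c3 c4 a b c p]) (use Af[OF abc(1)] Af[OF abc(2)] Af[OF abc(3)] TUf[OF tp] abc nac d3 pV dC N in \<open>simp_all add: CV Ce\<close>)
          qed
      qed
      show False using case1[of a b c] abc d3 noTU by auto
    next
      case noP3: False
      show False
      proof (cases "\<exists>a b c d. a \<in> A \<and> b \<in> A \<and> c \<in> A \<and> d \<in> A \<and> E a b \<and> E c d \<and> a \<noteq> c \<and> a \<noteq> d \<and> b \<noteq> c \<and> b \<noteq> d")
        case True
        then obtain a b c d where abcd: "a \<in> A" "b \<in> A" "c \<in> A" "d \<in> A" "E a b" "E c d" "a \<noteq> c" "a \<noteq> d" "b \<noteq> c" "b \<noteq> d" by blast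
        have d2: "a \<noteq> b" "c \<noteq> d" using abcd irr by auto
        have ba: "E b a" "E d c" using abcd(5,6) symE by blast+
        have cross: "\<not> E a c" "\<not> E a d" "\<not> E b c" "\<not> E b d"
        proof -
          show "\<not> E a c" using noP3 abcd ba by blast
          show "\<not> E a d" using noP3 abcd ba by blast
          show "\<not> E b c" using noP3 abcd ba by blast
          show "\<not> E b d" using noP3 abcd ba by blast
        qed
        have noTU: "\<forall>p\<in>V. \<not> TU p"
        proof (intro ballI notI)
          fix p assume pV: "p \<in> V" and tp: "TU p"
          show False
            proof -
              have N: "c0 \<noteq> c1" "c0 \<noteq> c2" "c0 \<noteq> c3" "c0 \<noteq> c4" "c0 \<noteq> a" "c0 \<noteq> b" "c0 \<noteq> c" "c0 \<noteq> d" "c0 \<noteq> p" "c1 \<noteq> c2" "c1 \<noteq> c3" "c1 \<noteq> c4" "c1 \<noteq> a" "c1 \<noteq> b" "c1 \<noteq> c" "c1 \<noteq> d" "c1 \<noteq> p" "c2 \<noteq> c3" "c2 \<noteq> c4" "c2 \<noteq> a" "c2 \<noteq> b" "c2 \<noteq> c" "c2 \<noteq> d" "c2 \<noteq> p" "c3 \<noteq> c4" "c3 \<noteq> a" "c3 \<noteq> b" "c3 \<noteq> c" "c3 \<noteq> d" "c3 \<noteq> p" "c4 \<noteq> a" "c4 \<noteq> b" "c4 \<noteq> c" "c4 \<noteq> d" "c4 \<noteq> p" "a \<noteq> b" "a \<noteq> c" "a \<noteq> d" "a \<noteq> p" "b \<noteq> c" "b \<noteq> d" "b \<noteq> p" "c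 \<noteq> d" "c \<noteq> p" "d \<noteq> p" using Af[OF abcd(1)] Af[OF abcd(2)] Af[OF abcd(3)] Af[OF abcd(4)] TUf[OF tp] abcd d2 cross pV dC irr by blast+
              show ?thesis by (rule G.L2K2[of c0 c1 c2 c3 c4 a b c d p]) (use Af[OF abcd(1)] Af[OF abcd(2)] Af[OF abcd(3)] Af[OF abcd(4)] TUf[OF tp] abcd d2 cross pV dC N in \<open>simp_all add: CV Ce\<close>)
            qed
        qed
        show False using case1[of a b c] abcd d2 noTU by auto
      next
        case noK2: False
        show False
        proof (cases "\<exists>a b. a \<in> A \<and> b \<in> A \<and> E a b")
          case True
          then obtain a b where ab: "a \<in> A" "b \<in> A" "E a b" by blast
          have "a \<noteq> b" using ab irr by auto
          then have "card (A - {a,b}) = card A - 2" using ab finA by (simp add: card_Diff_subset)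
          then have "2 \<le> card (A - {a,b})" using c4A by simp
          then obtain T where T: "T \<subseteq> A - {a,b}" "card T = 2" by (meson obtain_subset_with_card_n)
          then obtain c d where cd: "T = {c,d}" "c \<noteq> d" by (meson card_2_iff)
          have cdA: "c \<in> A" "d \<in> A" "c \<noteq> a" "c \<noteq> b" "d \<noteq> a" "d \<noteq> b" using T cd by auto
          have ba: "E b a" using ab symE by blast
          have nE: "\<not> E c d" "\<not> E c a" "\<not> E c b" "\<not> E d a" "\<not> E d b"
          proof -
            show "\<not> E c d" using noK2 ab cdA by blast
            show "\<not> E c a" using noP3 ab cdA by blast
            show "\<not> E d a" using noP3 ab cdA by blast
            have "\<not> E b c" using noP3 ab cdA by blast
            then show "\<not> E c b" using symE by blast
            have "\<not> E b d" using noP3 ab cdA by blast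
            then show "\<not> E d b" using symE by blast
          qed
          have "\<exists>w. E c w \<and> \<not> E d w"
          proof (rule ccontr)
            assume "\<not> (\<exists>w. E c w \<and> \<not> E d w)"
            then have "\<And>w. E c w \<Longrightarrow> E d w" by blast
            then show False
              using dominated[OF nc col[OF Af(1)[OF cdA(1)]] symE irr Af(1)[OF cdA(2)] nE(1)] \<open>c \<noteq> d\<close> by blast
          qed
          then obtain w where w: "E c w" "\<not> E d w" by blast
          have nEf: "\<not> E a c" "\<not> E a d" "\<not> E b c" "\<not> E b d" using nE symE by blast+
          have w': "E w c" "\<not> E w d" using w symE by blast+
          have wV: "w \<in> V" using inV w by blast
          have wC: "w \<notin> {c0,c1,c2,c3,c4}" using w Af[OF cdA(1)] Af[OF cdA(2)] by auto
          have wA: "w \<notin> A"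
          proof
            assume "w \<in> A"
            moreover have "w \<noteq> a" "w \<noteq> b" using w nE by auto
            ultimately show False using noK2 ab cdA w by blast
          qed
          have "w \<noteq> d" using w nE by auto
          then have "w \<in> A \<or> TU w" using cdA wV wC w' by (intro L1'[of c d w]) auto
          then have tw: "TU w" using wA by blast
          show False
            proof -
              have N: "c0 \<noteq> c1" "c0 \<noteq> c2" "c0 \<noteq> c3" "c0 \<noteq> c4" "c0 \<noteq> a" "c0 \<noteq> b" "c0 \<noteq> c" "c0 \<noteq> d" "c0 \<noteq> w" "c1 \<noteq> c2" "c1 \<noteq> c3" "c1 \<noteq> c4" "c1 \<noteq> a" "c1 \<noteq> b" "c1 \<noteq> c" "c1 \<noteq> d" "c1 \<noteq> w" "c2 \<noteq> c3" "c2 \<noteq> c4" "c2 \<noteq> a" "c2 \<noteq> b" "c2 \<noteq> c" "c2 \<noteq> d" "c2 \<noteq> w" "c3 \<noteq> c4" "c3 \<noteq> a" "c3 \<noteq> b" "c3 \<noteq> c" "c3 \<noteq> d" "c3 \<noteq> w" "c4 \<noteq> a" "c4 \<noteq> b" "c4 \<noteq> c" "c4 \<noteq> d" "c4 \<noteq> w" "a \<noteq> b" "a \<noteq> c" "a \<noteq> d" "a \<noteq> w" "b \<noteq> c" "b \<noteq> d" "b \<noteq> w" "c \<noteq> d" "c \<noteq> w" "d \<noteq> w" using Af[OF ab(1)] Af[OF ab(2)] Af[OF cdA(1)] Af[OF cdA(2)] TUf[OF tw] ab cdA nE nEf \<open>a \<noteq> b\<close> \<open>c \<noteq> d\<close>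 wV dC w' wA irr by blast+
              show ?thesis by (rule G.LK2K1[of c0 c1 c2 c3 c4 a b c d w]) (use Af[OF ab(1)] Af[OF ab(2)] Af[OF cdA(1)] Af[OF cdA(2)] TUf[OF tw] ab cdA nE nEf \<open>a \<noteq> b\<close> \<open>c \<noteq> d\<close> wV dC w' wA N in \<open>simp_all add: CV Ce\<close>)
            qed
        next
          case noE: False
          obtain T where T: "T \<subseteq> A" "card T = 3" using c4A obtain_subset_with_card_n[of 3 A] by auto
          then obtain c d e where cde: "T = {c,d,e}" "c \<noteq> d" "d \<noteq> e" "c \<noteq> e" by (meson card_3_iff)
          have cdeA: "c \<in> A" "d \<in> A" "e \<in> A" using T cde by auto
          have nE: "\<not> E c d" "\<not> E c e" "\<not> E d e" using noE cdeA by blast+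
          have nE': "\<not> E d c" using noE cdeA by blast
          have dom: "\<exists>w. E x w \<and> \<not> E y w" if "x \<in> A" "y \<in> A" "x \<noteq> y" for x y
          proof (rule ccontr)
            assume "\<not> (\<exists>w. E x w \<and> \<not> E y w)"
            then have "\<And>w. E x w \<Longrightarrow> E y w" by blast
            moreover have "\<not> E x y" using noE that by blast
            ultimately show False
              using dominated[OF nc col[OF Af(1)[OF that(1)]] symE irr Af(1)[OF that(2)]] that by blast
          qed
          have getTU: "TU w" if "x \<in> A" "y \<in> A" "E x w" "\<not> E y w" for x y w
          proof -
            have wV: "w \<in> V" using inV that by blast
            have wC: "w \<notin> {c0,c1,c2,c3,c4}" using that Af[OF that(1)] Af[OF that(2)] by auto
            have wA: "w \<notin> A" using noE that by blast
            have "w \<noteq> y" using that noE by blast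
            moreover have "E w x" "\<not> E w y" using that symE by blast+
            ultimately have "w \<in> A \<or> TU w" using that wV wC by (intro L1'[of x y w]) auto
            then show ?thesis using wA by blast
          qed
          obtain p where p: "E c p" "\<not> E d p" using dom[of c d] cdeA cde by blast
          obtain q where q: "E d q" "\<not> E c q" using dom[of d c] cdeA cde by blast
          have tp: "TU p" using getTU[of c d p] cdeA p by blast
          have tq: "TU q" using getTU[of d c q] cdeA q by blast
          have pV: "p \<in> V" and qV: "q \<in> V" using inV p q by blast+
          have p': "E p c" "\<not> E p d" "E q d" "\<not> E q c" using p q symE by blast+
          have pq: "p \<noteq> q" using p q by auto
          have pc: "p \<noteq> c" "p \<noteq> d" "p \<noteq> e" "q \<noteq> c" "q \<noteq> d" "q \<noteq> e" using TUf(6)[OF tp] TUf(6)[OF tq] cdeA by auto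
          have pe: "E p e"
            proof -
              have N: "c0 \<noteq> c1" "c0 \<noteq> c2" "c0 \<noteq> c3" "c0 \<noteq> c4" "c0 \<noteq> c" "c0 \<noteq> d" "c0 \<noteq> e" "c0 \<noteq> p" "c1 \<noteq> c2" "c1 \<noteq> c3" "c1 \<noteq> c4" "c1 \<noteq> c" "c1 \<noteq> d" "c1 \<noteq> e" "c1 \<noteq> p" "c2 \<noteq> c3" "c2 \<noteq> c4" "c2 \<noteq> c" "c2 \<noteq> d" "c2 \<noteq> e" "c2 \<noteq> p" "c3 \<noteq> c4" "c3 \<noteq> c" "c3 \<noteq> d" "c3 \<noteq> e" "c3 \<noteq> p" "c4 \<noteq> c" "c4 \<noteq> d" "c4 \<noteq> e" "c4 \<noteq> p" "c \<noteq> d" "c \<noteq> e" "c \<noteq> p" "d \<noteq> e" "d \<noteq> p" "e \<noteq> p" using Af[OF cdeA(1)] Af[OF cdeA(2)] Af[OF cdeA(3)] TUf[OF tp] cdeA nE cde pV dC p' pc irr by blast+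
              show ?thesis by (rule G.L3K1[of c0 c1 c2 c3 c4 c d e p]) (use Af[OF cdeA(1)] Af[OF cdeA(2)] Af[OF cdeA(3)] TUf[OF tp] cdeA nE cde pV dC p' pc N in \<open>simp_all add: CV Ce\<close>)
            qed
          have qe: "E q e"
            proof -
              have N: "c0 \<noteq> c1" "c0 \<noteq> c2" "c0 \<noteq> c3" "c0 \<noteq> c4" "c0 \<noteq> d" "c0 \<noteq> c" "c0 \<noteq> e" "c0 \<noteq> q" "c1 \<noteq> c2" "c1 \<noteq> c3" "c1 \<noteq> c4" "c1 \<noteq> d" "c1 \<noteq> c" "c1 \<noteq> e" "c1 \<noteq> q" "c2 \<noteq> c3" "c2 \<noteq> c4" "c2 \<noteq> d" "c2 \<noteq> c" "c2 \<noteq> e" "c2 \<noteq> q" "c3 \<noteq> c4" "c3 \<noteq> d" "c3 \<noteq> c" "c3 \<noteq> e" "c3 \<noteq> q" "c4 \<noteq> d" "c4 \<noteq> c" "c4 \<noteq> e" "c4 \<noteq> q" "d \<noteq> c" "d \<noteq> e" "d \<noteq> q" "c \<noteq> e" "c \<noteq> q" "e \<noteq> q" using Af[OF cdeA(1)] Af[OF cdeA(2)] Af[OF cdeA(3)] TUf[OF tq] cdeA nE cde qV dC p' pc nE' irr by blast+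
              show ?thesis by (rule G.L3K1[of c0 c1 c2 c3 c4 d c e q]) (use Af[OF cdeA(1)] Af[OF cdeA(2)] Af[OF cdeA(3)] TUf[OF tq] cdeA nE cde qV dC p' pc nE' N in \<open>simp_all add: CV Ce\<close>)
            qed
          show False
          proof (cases "E p q")
            case True
            have "E e c2" "E e c3" using Af[OF cdeA(3)] by blast+
            then show False
              using Af[OF cdeA(3)] TUf[OF tp] TUf[OF tq] pV qV pq pc pe qe True CV Ce
              by (intro G.K5''[of p q e c2 c3]) auto
          next
            case False
            show False
              proof -
                have N: "c0 \<noteq> c1" "c0 \<noteq> c2" "c0 \<noteq> c3" "c0 \<noteq> c4" "c0 \<noteq> c" "c0 \<noteq> d" "c0 \<noteq> p" "c0 \<noteq> q" "c1 \<noteq> c2" "c1 \<noteq> c3" "c1 \<noteq> c4" "c1 \<noteq> c" "c1 \<noteq> d" "c1 \<noteq> p" "c1 \<noteq> q" "c2 \<noteq> c3" "c2 \<noteq> c4" "c2 \<noteq> c" "c2 \<noteq> d" "c2 \<noteq> p" "c2 \<noteq> q" "c3 \<noteq> c4" "c3 \<noteq> c" "c3 \<noteq> d" "c3 \<noteq> p" "c3 \<noteq> q" "c4 \<noteq> c" "c4 \<noteq> d" "c4 \<noteq> p" "c4 \<noteq> q" "c \<noteq> d" "c \<noteq> p" "c \<noteq> q" "d \<noteq> p" "d \<noteq> q" "p \<noteq> q" using Af[OF cdeA(1)] Af[OF cdeA(2)] TUf[OF tp] TUf[OF tq] cdeA nE cde pV qV pq pc dC p' False irr by blast+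
                show ?thesis by (rule G.LPQ[of c0 c1 c2 c3 c4 c d p q]) (use Af[OF cdeA(1)] Af[OF cdeA(2)] TUf[OF tp] TUf[OF tq] cdeA nE cde pV qV pq pc dC p' False N in \<open>simp_all add: CV Ce\<close>)
              qed
          qed
        qed
      qed
    qed
  qed
qed

end
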